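(* Let $0<\alpha<1$ and let $n$ be sufficiently large in terms of $\alpha$. Let $G$ be a graph on $n$ vertices with $e(G)\geq n^{1+\alpha}$. Then $G$ contains a subgraph $G''$ on $m\geq n^{\alpha\frac{1-\alpha}{1+\alpha}}$ vertices such that $e(G'')\geq \frac13 m^{1+\alpha}$ and $\Delta(G'')\leq Km^{\alpha}$, where $K=10\cdot 2^{1/\alpha^2+1}$.
   Context: $e(G)$ is the number of edges and $\Delta(G)$ the maximum degree of $G$. *)

theory Defs
  imports Complex_Main
begin

definition simple_graph :: "'a set \<Rightarrow> 'a set set \<Rightarrow> bool" where
  "simple_graph V E \<longleftrightarrow> finite V \<and> (\<forall>e\<in>E. e \<subseteq> V \<and> card e = 2)"

definition degree :: "'a set set \<Rightarrow> 'a \<Rightarrow> nat" where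
  "degree E v = card {e\<in>E. v \<in> e}"

definition max_degree :: "'a set \<Rightarrow> 'a set set \<Rightarrow> nat" where
  "max_degree V E = Max (insert 0 (degree E ` V))"

definition subgraph :: "'a set \<Rightarrow> 'a set set \<Rightarrow> 'a set \<Rightarrow> 'a set set \<Rightarrow> bool" where
  "subgraph V' E' V E \<longleftrightarrow> V' \<subseteq> V \<and> E' \<subseteq> E \<and> (\<forall>e\<in>E'. e \<subseteq> V')"

end

theory Submission
  imports Defs
begin

lemma double_count:
  assumes "finite A" "finite C"
  shows "(\<Sum>a\<in>A. card {e\<in>C. a \<in> e}) = (\<Sum>e\<in>C. card (A \<inter> e))"
proof -
  have "(\<Sum>a\<in>A. card {e\<in>C. a \<in> e}) = (\<Sum>a\<in>A. \<Sum>e\<in>C. if a \<in> e then 1 else (0::nat))"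
  proof (rule sum.cong)
    fix a assume "a \<in> A"
    have "card {e\<in>C. a \<in> e} = sum (\<lambda>_. 1::nat) {e\<in>C. a \<in> e}" by simp
    also have "\<dots> = (\<Sum>e\<in>C. if a \<in> e then 1 else 0)" using assms(2) by (rule sum.inter_filter)
    finally show "card {e\<in>C. a \<in> e} = (\<Sum>e\<in>C. if a \<in> e then 1 else 0)" .
  qed simp
  also have "\<dots> = (\<Sum>e\<in>C. \<Sum>a\<in>A. if a \<in> e then 1 else (0::nat))"
    by (rule sum.swap)
  also have "\<dots> = (\<Sum>e\<in>C. card (A \<inter> e))"
  proof (rule sum.cong)
    fix e assume "e \<in> C"
    have "A \<inter> e = {a\<in>A. a \<in> e}" by blast
    hence "card (A \<inter> e) = sum (\<lambda>_. 1::nat) {a\<in>A. a \<in> e}" by simp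
    also have "\<dots> = (\<Sum>a\<in>A. if a \<in> e then 1 else 0)" using assms(1) by (rule sum.inter_filter)
    finally show "(\<Sum>a\<in>A. if a \<in> e then 1 else 0) = card (A \<inter> e)" by simp
  qed simp
  finally show ?thesis .
qed

lemma top_k:
  fixes w :: "'a \<Rightarrow> nat"
  assumes "finite R" "k \<le> card R"
  shows "\<exists>T\<subseteq>R. card T = k \<and> k * sum w R \<le> card R * sum w T"
proof -
  obtain T0 where "T0 \<subseteq> R" "card T0 = k" using obtain_subset_with_card_n[OF assms(2)] by metis
  have "\<exists>T. (T \<subseteq> R \<and> card T = k) \<and> (\<forall>T'. (T' \<subseteq> R \<and> card T' = k) \<longrightarrow> sum w T' \<le> sum w T)"
  proof (rule ex_has_greatest_nat[where b = "sum w R + 1"])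
    show "T0 \<subseteq> R \<and> card T0 = k" using \<open>T0 \<subseteq> R\<close> \<open>card T0 = k\<close> by simp
    show "\<forall>y. y \<subseteq> R \<and> card y = k \<longrightarrow> sum w y < sum w R + 1"
      using assms(1) by (auto intro: sum_mono2 le_imp_less_Suc)
  qed
  then obtain T where T: "T \<subseteq> R" "card T = k" and Tmax: "\<And>T'. T' \<subseteq> R \<Longrightarrow> card T' = k \<Longrightarrow> sum w T' \<le> sum w T"
    by blast
  have finT: "finite T" using T assms(1) finite_subset by blast
  have exch: "w y \<le> w x" if "x \<in> T" "y \<in> R - T" for x y
  proof -
    let ?T' = "insert y (T - {x})"
    have "?T' \<subseteq> R" using T that by auto
    moreover have "card ?T' = k" proof -
      have "card (T - {x}) = k - 1" using T that finT by simp
      moreover have "k \<ge> 1" using T that finT card_gt_0_iff[of T] by (metis One_nat_def Suc_leI empty_iff)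
      moreover have "y \<notin> T - {x}" using that by simp
      ultimately show ?thesis using finT by simp
    qed
    ultimately have "sum w ?T' \<le> sum w T" by (rule Tmax)
    moreover have "sum w ?T' = w y + sum w (T - {x})" using that finT by simp
    moreover have "sum w T = w x + sum w (T - {x})" using that finT
      by (metis sum.remove)
    ultimately show ?thesis by simp
  qed
  have "k * sum w (R - T) = (\<Sum>x\<in>T. \<Sum>y\<in>R - T. w y)" using T by simp
  also have "\<dots> \<le> (\<Sum>x\<in>T. \<Sum>y\<in>R - T. w x)"
    by (intro sum_mono) (use exch in auto)
  also have "\<dots> = card (R - T) * sum w T" by (simp add: sum_distrib_left)
  finally have 1: "k * sum w (R - T) \<le> card (R - T) * sum w T" .
  have cRT: "card (R - T) = card R - k" using T finT by (simp add: card_Diff_subset)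
  have sR: "sum w R = sum w T + sum w (R - T)"
    using T assms(1) by (metis add.commute sum.subset_diff)
  have "k * sum w R = k * sum w T + k * sum w (R - T)" using sR by (simp add: algebra_simps)
  also have "\<dots> \<le> k * sum w T + (card R - k) * sum w T" using 1 cRT by simp
  also have "\<dots> = card R * sum w T" using assms(2) by (simp add: algebra_simps)
  finally show ?thesis using T by blast
qed


lemma degree_insert_le:
  "degree (insert e F) v \<le> degree F v + (if v \<in> e then 1 else 0)"
proof (cases "v \<in> e")
  case True
  have "{x\<in>insert e F. v \<in> x} = insert e {x\<in>F. v \<in> x}" using True by auto
  have "card (insert e {x\<in>F. v \<in> x}) \<le> card {x\<in>F. v \<in> x} + 1"
    by (cases "finite {x\<in>F. v \<in> x}") (auto simp: card_insert_if)
  then show ?thesis unfolding degree_def using True \<open>{x\<in>insert e F. v \<in> x} = _\<close> by simp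
next
  case False
  have "{x\<in>insert e F. v \<in> x} = {x\<in>F. v \<in> x}" using False by auto
  then show ?thesis unfolding degree_def by simp
qed

lemma handshake:
  assumes "finite U" "finite F" "\<forall>e\<in>F. e \<subseteq> U \<and> card e = 2"
  shows "(\<Sum>v\<in>U. degree F v) = 2 * card F"
proof -
  have "(\<Sum>v\<in>U. degree F v) = (\<Sum>e\<in>F. card (U \<inter> e))"
    unfolding degree_def by (rule double_count[OF assms(1,2)])
  also have "\<dots> = (\<Sum>e\<in>F. 2)"
    by (rule sum.cong) (use assms(3) in \<open>auto simp: Int_absorb1\<close>)
  finally show ?thesis by simp
qed

lemma card_edges_le:
  assumes "finite U" "\<forall>e\<in>F. e \<subseteq> U \<and> card e = 2"
  shows "card F \<le> card U ^ 2"
proof (cases "card U \<ge> 2")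
  case True
  have "F \<subseteq> {B. B \<subseteq> U \<and> card B = 2}" using assms(2) by auto
  hence "card F \<le> card {B. B \<subseteq> U \<and> card B = 2}"
    by (intro card_mono) (use assms(1) in auto)
  also have "\<dots> = card U choose 2" using n_subsets[OF assms(1)] by simp
  also have "\<dots> \<le> card U ^ 2" using binomial_le_pow True by blast
  finally show ?thesis .
next
  case False
  have "F = {}"
  proof (rule ccontr)
    assume "F \<noteq> {}"
    then obtain e where "e \<in> F" by blast
    hence "card e \<le> card U" using assms by (intro card_mono) auto
    thus False using \<open>e\<in>F\<close> assms False by auto
  qed
  thus ?thesis by simp
qed


lemma max_degree_le:
  assumes "finite V" "\<forall>v\<in>V. real (degree E v) \<le> D" "D \<ge> 0"
  shows "real (max_degree V E) \<le> D"
proof -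
  have "Max (insert 0 (degree E ` V)) \<in> insert 0 (degree E ` V)"
    by (rule Max_in) (use assms(1) in auto)
  thus ?thesis unfolding max_degree_def using assms by auto
qed

lemma main:
  fixes \<alpha> t \<gamma> \<delta> K L n0 :: real
  assumes a0: "0 < \<alpha>" and a1: "\<alpha> < 1" and t0: "0 < t" and t1: "t < 1" and g0: "\<gamma> > 0"
    and dd: "\<delta> = 1 + t" and gg: "\<gamma> = \<alpha> - t" and L30: "L \<ge> 30" and Lt: "L powr t \<ge> 4 powr \<delta>"
    and KL: "K = 4/3 * L" and n01: "n0 \<ge> 1"
  shows "\<forall>(U::'a set) F. card U = u \<longrightarrow> finite U \<longrightarrow> real u \<le> n0 \<longrightarrow> (\<forall>e\<in>F. e \<subseteq> U \<and> card e = 2)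
     \<longrightarrow> F \<noteq> {} \<longrightarrow> real (card F) \<ge> n0 powr \<gamma> * real u powr \<delta> \<longrightarrow>
     (\<exists>V' E'. V' \<subseteq> U \<and> E' \<subseteq> F \<and> (\<forall>e\<in>E'. e \<subseteq> V') \<and> real (card V') \<ge> n0 powr (\<gamma> / (1 - t)) \<and>
        real (card E') \<ge> 1/3 * real (card V') powr (1 + \<alpha>) \<and>
        real (max_degree V' E') \<le> K * real (card V') powr \<alpha>)"
proof (induction u rule: less_induct)
  case (less u)
  show ?case
  proof (intro allI impI)
    fix U :: "'a set" and F
    assume cU: "card U = u" and finU: "finite U" and un0: "real u \<le> n0"
      and FU: "\<forall>e\<in>F. e \<subseteq> U \<and> card e = 2" and Fne: "F \<noteq> {}"
      and Fbig: "real (card F) \<ge> n0 powr \<gamma> * real u powr \<delta>"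
    have finF: "finite F"
      using FU finU by (meson Pow_iff finite_Pow_iff rev_finite_subset subsetI)
    have u1: "u \<ge> 1"
    proof -
      obtain e where "e \<in> F" using Fne by blast
      hence "e \<subseteq> U" "card e = 2" using FU by auto
      hence "card e \<le> u" using cU finU card_mono by blast
      thus ?thesis using \<open>card e = 2\<close> by simp
    qed
    have ur1: "real u \<ge> 1" using u1 by simp
    have upa: "real u powr \<alpha> \<ge> 1" using ur1 a0 by (intro ge_one_powr_ge_zero) auto
    define D where "D = K * real u powr \<alpha>"
    have K40: "K \<ge> 40" using KL L30 by simp
    have "K * real u powr \<alpha> \<ge> 40 * 1" by (rule mult_mono) (use K40 upa in auto)
    hence D40: "D \<ge> 40" unfolding D_def by simp

    have unpos: "real u > 0" using ur1 by simp
    have Fu: "real (card F) \<ge> real u powr (1 + \<alpha>)"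
    proof -
      have "real u powr \<gamma> \<le> n0 powr \<gamma>" using un0 g0 unpos by (intro powr_mono2) auto
      hence "real u powr \<gamma> * real u powr \<delta> \<le> n0 powr \<gamma> * real u powr \<delta>"
        by (intro mult_right_mono) auto
      moreover have "real u powr \<gamma> * real u powr \<delta> = real u powr (1 + \<alpha>)"
        using dd gg by (simp add: powr_add[symmetric] add.commute)
      ultimately show ?thesis using Fbig by linarith
    qed
    have "\<exists>G. (G \<subseteq> F \<and> (\<forall>v. real (degree G v) \<le> D)) \<and>
             (\<forall>G'. (G' \<subseteq> F \<and> (\<forall>v. real (degree G' v) \<le> D)) \<longrightarrow> card G' \<le> card G)"
    proof (rule ex_has_greatest_nat[where b = "card F + 1"])
      show "{} \<subseteq> F \<and> (\<forall>v. real (degree {} v) \<le> D)" using D40 by (simp add: degree_def)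
      show "\<forall>y. y \<subseteq> F \<and> (\<forall>v. real (degree y v) \<le> D) \<longrightarrow> card y < card F + 1"
        using finF by (auto intro: le_imp_less_Suc card_mono)
    qed
    then obtain F' where F'12: "(F' \<subseteq> F \<and> (\<forall>v. real (degree F' v) \<le> D)) \<and>
      (\<forall>G'. (G' \<subseteq> F \<and> (\<forall>v. real (degree G' v) \<le> D)) \<longrightarrow> card G' \<le> card F')"
      by (erule exE)
    note F'1 = conjunct1[OF F'12] and F'2 = conjunct2[OF F'12]
    have F'F: "F' \<subseteq> F" and F'deg: "\<And>v. real (degree F' v) \<le> D" using F'1 by auto
    have F'max: "\<And>G'. G' \<subseteq> F \<Longrightarrow> (\<forall>v. real (degree G' v) \<le> D) \<Longrightarrow> card G' \<le> card F'"
      using F'2 by blast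
    have finF': "finite F'" using F'F finF finite_subset by blast
    show "\<exists>V' E'. V' \<subseteq> U \<and> E' \<subseteq> F \<and> (\<forall>e\<in>E'. e \<subseteq> V') \<and> real (card V') \<ge> n0 powr (\<gamma> / (1 - t)) \<and>
        real (card E') \<ge> 1/3 * real (card V') powr (1 + \<alpha>) \<and>
        real (max_degree V' E') \<le> K * real (card V') powr \<alpha>"
    proof (cases "real (card F') \<ge> 1/3 * real u powr (1 + \<alpha>)")
      case True
      have "card F \<le> u ^ 2" using card_edges_le[OF finU FU] cU by simp
      hence "real (card F) \<le> real (u ^ 2)" by (simp only: of_nat_le_iff)
      also have "\<dots> = real u ^ 2" by simp
      also have "\<dots> = real u powr 2" using powr_realpow[OF unpos, of 2] by simp
      also have "\<dots> = real u powr (1 - t) * real u powr \<delta>"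
        using powr_add[of "real u" "1 - t" "\<delta>"] dd by simp
      finally have "n0 powr \<gamma> * real u powr \<delta> \<le> real u powr (1 - t) * real u powr \<delta>"
        using Fbig by linarith
      hence ng: "n0 powr \<gamma> \<le> real u powr (1 - t)" using unpos
        using mult_le_cancel_right[of "n0 powr \<gamma>" "real u powr \<delta>" "real u powr (1 - t)"]
          powr_gt_zero[of "real u" \<delta>] unpos by simp
      have "(n0 powr \<gamma>) powr (1 / (1 - t)) \<le> (real u powr (1 - t)) powr (1 / (1 - t))"
        using t1 ng by (intro powr_mono2) auto
      moreover have "(n0 powr \<gamma>) powr (1 / (1 - t)) = n0 powr (\<gamma> / (1 - t))"
        by (simp add: powr_powr)
      moreover have "(real u powr (1 - t)) powr (1 / (1 - t)) = real u"
        using t1 unpos by (simp add: powr_powr)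
      ultimately have size: "n0 powr (\<gamma> / (1 - t)) \<le> real u" by simp
      have md0: "real (max_degree U F') \<le> D"
        by (rule max_degree_le[OF finU]) (use F'deg D40 in auto)
      have md: "real (max_degree U F') \<le> K * real u powr \<alpha>" using md0 unfolding D_def .
      have e1: "\<forall>e\<in>F'. e \<subseteq> U" using F'F FU by blast
      have e2: "n0 powr (\<gamma> / (1 - t)) \<le> real (card U)" using size cU by simp
      have e3: "1/3 * real (card U) powr (1 + \<alpha>) \<le> real (card F')" using True cU by simp
      have e4: "real (max_degree U F') \<le> K * real (card U) powr \<alpha>" using md cU by simp
      have "U \<subseteq> U \<and> F' \<subseteq> F \<and> (\<forall>e\<in>F'. e \<subseteq> U) \<and> n0 powr (\<gamma> / (1 - t)) \<le> real (card U) \<and>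
        1/3 * real (card U) powr (1 + \<alpha>) \<le> real (card F') \<and>
        real (max_degree U F') \<le> K * real (card U) powr \<alpha>"
        using F'F e1 e2 e3 e4 by (intro conjI) (rule subset_refl)
      then show ?thesis by (intro exI)
    next
      case False
      hence F'small: "real (card F') < 1/3 * real u powr (1 + \<alpha>)" by simp
      define S where "S = {v\<in>U. real (degree F' v) + 1 > D}"
      have SU: "S \<subseteq> U" unfolding S_def by blast
      have finS: "finite S" using SU finU finite_subset by blast
      have hit: "e \<inter> S \<noteq> {}" if eF: "e \<in> F" and eF': "e \<notin> F'" for e
      proof -
        have "insert e F' \<subseteq> F" using eF F'F by blast
        moreover have "card (insert e F') > card F'" using finF' eF' by simp
        ultimately have "\<not> (\<forall>v. real (degree (insert e F') v) \<le> D)"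
          using F'max[of "insert e F'"] by (meson not_le)
        then obtain v where v: "real (degree (insert e F') v) > D" by (auto simp: not_le)
        have ins: "real (degree (insert e F') v) \<le> real (degree F' v + (if v \<in> e then 1 else 0))"
          using degree_insert_le[of e F' v] by (simp only: of_nat_le_iff)
        have "v \<in> e"
        proof (rule ccontr)
          assume "v \<notin> e"
          thus False using ins v F'deg[of v] by simp
        qed
        hence "real (degree F' v) + 1 > D" using ins v by simp
        moreover have "v \<in> U" using \<open>v\<in>e\<close> eF FU by blast
        ultimately have "v \<in> S" unfolding S_def by blast
        thus ?thesis using \<open>v\<in>e\<close> by blast
      qed
      define FS where "FS = {e\<in>F. e \<subseteq> S}"
      define C where "C = {e\<in>F. e \<inter> S \<noteq> {} \<and> \<not> e \<subseteq> S}"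
      have FsubU: "F \<subseteq> F' \<union> FS \<union> C"
      proof
        fix e assume eF: "e \<in> F"
        show "e \<in> F' \<union> FS \<union> C"
        proof (cases "e \<in> F'")
          case False
          hence "e \<inter> S \<noteq> {}" using hit eF by blast
          thus ?thesis using eF unfolding FS_def C_def by blast
        qed simp
      qed
      have finFS: "finite FS" unfolding FS_def using finF by simp
      have finC: "finite C" unfolding C_def using finF by simp
      have "card F \<le> card (F' \<union> FS \<union> C)" using FsubU finF' finFS finC by (intro card_mono) auto
      also have "\<dots> \<le> card (F' \<union> FS) + card C" by (rule card_Un_le)
      also have "\<dots> \<le> card F' + card FS + card C" using card_Un_le[of F' FS] by simp
      finally have cnt: "card F \<le> card F' + card FS + card C" .
      hence cntr: "real (card F) \<le> real (card F') + real (card FS) + real (card C)"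
        by (simp only: of_nat_add[symmetric] of_nat_le_iff)
      have two3: "real (card FS) + real (card C) \<ge> 2/3 * real (card F)"
        using cntr F'small Fu by linarith
      have F'U: "\<forall>e\<in>F'. e \<subseteq> U \<and> card e = 2" using F'F FU by blast
      have hs: "(\<Sum>v\<in>U. degree F' v) = 2 * card F'" by (rule handshake[OF finU finF' F'U])
      have "(\<Sum>v\<in>S. real (degree F' v)) \<le> (\<Sum>v\<in>U. real (degree F' v))"
        using SU finU by (intro sum_mono2) auto
      also have "\<dots> = real (\<Sum>v\<in>U. degree F' v)" by (rule of_nat_sum[symmetric])
      also have "\<dots> = 2 * real (card F')" using hs by simp
      finally have s1: "(\<Sum>v\<in>S. real (degree F' v)) \<le> 2 * real (card F')" .
      have "(\<Sum>v\<in>S. (D - 1)) \<le> (\<Sum>v\<in>S. real (degree F' v))"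
        by (intro sum_mono) (auto simp: S_def)
      hence s2: "real (card S) * (D - 1) \<le> 2 * real (card F')" using s1 by (simp add: mult.commute)
      have "real (card S) * 2 \<le> real (card S) * D" by (rule mult_left_mono) (use D40 in auto)
      hence "real (card S) * D \<le> 2 * (real (card S) * (D - 1))" by (simp add: algebra_simps)
      hence s3: "real (card S) * D < 4/3 * real u powr (1 + \<alpha>)" using s2 F'small by linarith
      have pua: "real u powr (1 + \<alpha>) = real u * real u powr \<alpha>"
        using powr_add[of "real u" 1 \<alpha>] unpos by simp
      have "real (card S) * D = 4/3 * ((L * real (card S)) * real u powr \<alpha>)"
        unfolding D_def KL by (simp add: algebra_simps)
      hence "(L * real (card S)) * real u powr \<alpha> < real u * real u powr \<alpha>" using s3 pua by linarith
      hence sL: "L * real (card S) < real u"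
        using mult_less_cancel_right_pos[of "real u powr \<alpha>"] unpos by simp
      have s30: "30 * real (card S) \<le> L * real (card S)" by (rule mult_right_mono) (use L30 in auto)
      have slu: "card S < u" using sL s30 by linarith
      have s4u: "4 * card S < u" using sL s30 by linarith
      have "real (card S) \<le> n0" using slu un0 by linarith
      have P0: "n0 powr \<gamma> \<ge> 0" by simp
      have "real (card FS) \<ge> real (card F) / 3 \<or> real (card C) \<ge> real (card F) / 3" using two3 by linarith
      thus ?thesis
      proof
        assume FS3: "real (card FS) \<ge> real (card F) / 3"
        have FSU: "\<forall>e\<in>FS. e \<subseteq> S \<and> card e = 2" using FU unfolding FS_def by blast
        have Fpos: "real (card F) > 0" using Fne finF by (simp add: card_gt_0_iff)
        hence FSne: "FS \<noteq> {}" using FS3 by auto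
        have "(L * real (card S)) powr \<delta> \<le> real u powr \<delta>"
          using sL dd t0 L30 by (intro powr_mono2) auto
        moreover have "(L * real (card S)) powr \<delta> = L powr \<delta> * real (card S) powr \<delta>"
          by (fact powr_mult)
        moreover have "L powr \<delta> \<ge> L powr 1" using L30 dd t0 by (intro powr_mono) auto
        moreover have "L powr 1 = L" using L30 by simp
        ultimately have "L * real (card S) powr \<delta> \<le> real u powr \<delta>"
          using mult_right_mono[of L "L powr \<delta>" "real (card S) powr \<delta>"] by simp
        moreover have "3 * real (card S) powr \<delta> \<le> L * real (card S) powr \<delta>"
          using L30 by (intro mult_right_mono) auto
        ultimately have "3 * real (card S) powr \<delta> \<le> real u powr \<delta>" by linarith
        hence "n0 powr \<gamma> * (3 * real (card S) powr \<delta>) \<le> n0 powr \<gamma> * real u powr \<delta>"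
          by (intro mult_left_mono) auto
        hence FSbig: "real (card FS) \<ge> n0 powr \<gamma> * real (card S) powr \<delta>"
          using FS3 Fbig by linarith
        have "\<exists>V' E'. V' \<subseteq> S \<and> E' \<subseteq> FS \<and> (\<forall>e\<in>E'. e \<subseteq> V') \<and> real (card V') \<ge> n0 powr (\<gamma> / (1 - t)) \<and>
          real (card E') \<ge> 1/3 * real (card V') powr (1 + \<alpha>) \<and>
          real (max_degree V' E') \<le> K * real (card V') powr \<alpha>"
          using less.IH[OF slu] finS \<open>real (card S) \<le> n0\<close> FSU FSne FSbig by blast
        then obtain V' E' where VE: "V' \<subseteq> S \<and> E' \<subseteq> FS \<and> (\<forall>e\<in>E'. e \<subseteq> V') \<and> real (card V') \<ge> n0 powr (\<gamma> / (1 - t)) \<and>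
          real (card E') \<ge> 1/3 * real (card V') powr (1 + \<alpha>) \<and>
          real (max_degree V' E') \<le> K * real (card V') powr \<alpha>" by (elim exE)
        have "V' \<subseteq> U" using VE SU by blast
        moreover have "E' \<subseteq> F" using VE unfolding FS_def by blast
        ultimately show ?thesis using VE by blast
      next
        assume C3: "real (card C) \<ge> real (card F) / 3"
        have Fpos: "real (card F) > 0" using Fne finF by (simp add: card_gt_0_iff)
        hence Cne: "C \<noteq> {}" using C3 by auto
        then obtain e0 where "e0 \<in> C" by blast
        hence "S \<noteq> {}" unfolding C_def by blast
        hence s1: "card S \<ge> 1" using finS by (simp add: Suc_le_eq card_gt_0_iff)
        define R where "R = U - S"
        have RU: "R \<subseteq> U" unfolding R_def by blast
        have finR: "finite R" using RU finU finite_subset by blast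
        have cardR: "card R = u - card S" unfolding R_def using SU finU cU by (simp add: card_Diff_subset finS)
        have Cprop: "card (R \<inter> e) = 1" if eC: "e \<in> C" for e
        proof -
          have eU: "e \<subseteq> U" and ce: "card e = 2" and eS: "e \<inter> S \<noteq> {}" and neS: "\<not> e \<subseteq> S"
            using eC FU unfolding C_def by auto
          have fe: "finite e" using ce card.infinite by fastforce
          have "e = (e \<inter> S) \<union> (R \<inter> e)" using eU unfolding R_def by blast
          moreover have "(e \<inter> S) \<inter> (R \<inter> e) = {}" unfolding R_def by blast
          ultimately have "card e = card (e \<inter> S) + card (R \<inter> e)" using fe
            by (metis card_Un_disjoint finite_Int inf_commute)
          moreover have "card (e \<inter> S) \<ge> 1" using eS fe by (simp add: Suc_le_eq card_gt_0_iff)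
          moreover have "R \<inter> e \<noteq> {}" using eU neS unfolding R_def by blast
          hence "card (R \<inter> e) \<ge> 1" using fe by (simp add: Suc_le_eq card_gt_0_iff)
          ultimately show ?thesis using ce by linarith
        qed
        define w where "w = (\<lambda>r. card {e\<in>C. r \<in> e})"
        have "sum w R = (\<Sum>e\<in>C. card (R \<inter> e))" unfolding w_def by (rule double_count[OF finR finC])
        also have "\<dots> = (\<Sum>e\<in>C. 1)" by (rule sum.cong) (use Cprop in auto)
        finally have sumR: "sum w R = card C" by simp
        have k3: "3 * card S \<le> card R" using cardR s4u by linarith
        obtain T where TR: "T \<subseteq> R" and cT: "card T = 3 * card S"
          and Tw: "3 * card S * sum w R \<le> card R * sum w T"
          using top_k[OF finR k3, of w] by blast
        have finT: "finite T" using TR finR finite_subset by blast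
        define F2 where "F2 = {e\<in>C. e \<subseteq> S \<union> T}"
        have cTe: "card (T \<inter> e) = (if e \<subseteq> S \<union> T then 1 else 0)" if eC: "e \<in> C" for e
        proof -
          obtain r where r: "R \<inter> e = {r}" using Cprop[OF eC] card_1_singletonE by blast
          have eU: "e \<subseteq> U" using eC FU unfolding C_def by auto
          show ?thesis
          proof (cases "e \<subseteq> S \<union> T")
            case True
            have "r \<in> T" using r True unfolding R_def by blast
            hence "T \<inter> e = {r}" using r TR by blast
            thus ?thesis using True by simp
          next
            case False
            then obtain x where "x \<in> e" "x \<notin> S \<union> T" by blast
            hence "x \<in> R \<inter> e" using eU unfolding R_def by blast
            hence "x = r" using r by blast
            hence "T \<inter> e = {}" using r TR \<open>x \<notin> S \<union> T\<close> by auto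
            thus ?thesis using False by simp
          qed
        qed
        have "sum w T = (\<Sum>e\<in>C. card (T \<inter> e))" unfolding w_def by (rule double_count[OF finT finC])
        also have "\<dots> = (\<Sum>e\<in>C. if e \<subseteq> S \<union> T then 1 else 0)" by (rule sum.cong) (use cTe in auto)
        also have "\<dots> = sum (\<lambda>_. 1::nat) F2" unfolding F2_def by (rule sum.inter_filter[OF finC, symmetric])
        finally have cF2: "card F2 = sum w T" by simp
        have ST: "S \<inter> T = {}" using TR unfolding R_def by blast
        have cU2: "card (S \<union> T) = 4 * card S" using card_Un_disjoint[OF finS finT ST] cT by simp
        have finU2: "finite (S \<union> T)" using finS finT by simp
        have u2: "card (S \<union> T) < u" using cU2 s4u by simp
        have u2n: "real (card (S \<union> T)) \<le> n0" using u2 un0 by linarith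
        have F2U: "\<forall>e\<in>F2. e \<subseteq> S \<union> T \<and> card e = 2" using FU unfolding F2_def C_def by blast
        have "card S * card F \<le> 3 * card S * card C"
        proof -
          have "card F \<le> 3 * card C" using C3 by linarith
          thus ?thesis by simp
        qed
        also have "\<dots> \<le> card R * card F2" using Tw sumR cF2 by simp
        also have "\<dots> \<le> u * card F2" using cardR by simp
        finally have key: "real (card S) * real (card F) \<le> real u * real (card F2)"
          by (simp only: of_nat_mult[symmetric] of_nat_le_iff)
        define s where "s = real (card S)"
        have sp: "s \<ge> 1" unfolding s_def using s1 by simp
        define P where "P = n0 powr \<gamma>"
        have P0: "P \<ge> 0" unfolding P_def by simp
        have "(L * s) powr t \<le> real u powr t" using sL t0 L30 sp unfolding s_def by (intro powr_mono2) auto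
        moreover have "(L * s) powr t = L powr t * s powr t" by (fact powr_mult)
        ultimately have "L powr t * s powr t \<le> real u powr t" by simp
        moreover have "4 powr \<delta> * s powr t \<le> L powr t * s powr t"
          using Lt by (intro mult_right_mono) auto
        ultimately have A1: "4 powr \<delta> * s powr t \<le> real u powr t" by linarith
        have "(4 * s) powr \<delta> = 4 powr \<delta> * s powr \<delta>" by (fact powr_mult)
        also have "s powr \<delta> = s * s powr t" using powr_add[of s 1 t] dd sp by simp
        finally have A2: "(4 * s) powr \<delta> = s * (4 powr \<delta> * s powr t)" by simp
        have A3: "real u powr \<delta> = real u * real u powr t" using powr_add[of "real u" 1 t] dd unpos by simp
        have "P * (4 * s) powr \<delta> = (P * s) * (4 powr \<delta> * s powr t)" using A2 by simp
        also have "\<dots> \<le> (P * s) * real u powr t" using A1 P0 sp by (intro mult_left_mono) auto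
        finally have A4: "P * (4 * s) powr \<delta> \<le> P * s * real u powr t" .
        have "(P * s * real u powr t) * real u = s * (P * real u powr \<delta>)" using A3 by (simp add: algebra_simps)
        also have "\<dots> \<le> s * real (card F)" using Fbig sp unfolding P_def by (intro mult_left_mono) auto
        also have "\<dots> \<le> real (card F2) * real u" using key unfolding s_def by (simp add: mult.commute)
        finally have "P * s * real u powr t \<le> real (card F2)"
          using mult_le_cancel_right_pos[of "real u"] unpos by simp
        hence F2big: "real (card F2) \<ge> n0 powr \<gamma> * real (card (S \<union> T)) powr \<delta>"
          using A4 cU2 unfolding P_def s_def by simp
        have F2ne: "F2 \<noteq> {}"
        proof
          assume "F2 = {}"
          hence "n0 powr \<gamma> * real (card (S \<union> T)) powr \<delta> \<le> 0" using F2big by simp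
          moreover have "n0 powr \<gamma> > 0" using n01 by simp
          moreover have "real (card (S \<union> T)) powr \<delta> > 0" using cU2 s1 by simp
          ultimately show False by (simp add: mult_le_0_iff)
        qed
        have "\<exists>V' E'. V' \<subseteq> S \<union> T \<and> E' \<subseteq> F2 \<and> (\<forall>e\<in>E'. e \<subseteq> V') \<and> real (card V') \<ge> n0 powr (\<gamma> / (1 - t)) \<and>
          real (card E') \<ge> 1/3 * real (card V') powr (1 + \<alpha>) \<and>
          real (max_degree V' E') \<le> K * real (card V') powr \<alpha>"
          using less.IH[OF u2] finU2 u2n F2U F2ne F2big by blast
        then obtain V' E' where VE: "V' \<subseteq> S \<union> T \<and> E' \<subseteq> F2 \<and> (\<forall>e\<in>E'. e \<subseteq> V') \<and> real (card V') \<ge> n0 powr (\<gamma> / (1 - t)) \<and>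
          real (card E') \<ge> 1/3 * real (card V') powr (1 + \<alpha>) \<and>
          real (max_degree V' E') \<le> K * real (card V') powr \<alpha>" by (elim exE)
        have "V' \<subseteq> U" using VE SU TR RU by blast
        moreover have "E' \<subseteq> F" using VE unfolding F2_def C_def by blast
        ultimately show ?thesis using VE by blast
      qed
    qed
  qed
qed


theorem lemma2p9:
  fixes \<alpha> :: real
  assumes "0 < \<alpha>" and "\<alpha> < 1"
  shows "\<exists>N::nat. \<forall>n\<ge>N. \<forall>(V::nat set) E.
           simple_graph V E \<longrightarrow> card V = n \<longrightarrow> real (card E) \<ge> real n powr (1 + \<alpha>) \<longrightarrow>
           (\<exists>V' E'. subgraph V' E' V E \<and>
              real (card V') \<ge> real n powr (\<alpha> * (1 - \<alpha>) / (1 + \<alpha>)) \<and>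
              real (card E') \<ge> 1/3 * real (card V') powr (1 + \<alpha>) \<and>
              real (max_degree V' E') \<le> 10 * 2 powr (1 / \<alpha>^2 + 1) * real (card V') powr \<alpha>)"
proof -
  have a0: "0 < \<alpha>" and a1: "\<alpha> < 1" using assms by auto
  define t where "t = 2 * \<alpha>^2 / (1 + \<alpha>^2)"
  define \<gamma> where "\<gamma> = \<alpha> - t"
  define \<delta> where "\<delta> = 1 + t"
  define L where "L = 15 * 2 powr (1 / \<alpha>^2)"
  define K where "K = 4/3 * L"
  have q0: "\<alpha>^2 > 0" using a0 by simp
  have q2: "1 + \<alpha>^2 > 0" using q0 by linarith
  have q1: "\<alpha>^2 < 1" using a0 a1 by (simp add: power_less_one_iff abs_if)
  have t0: "0 < t" unfolding t_def using q0 q2 by (intro divide_pos_pos) auto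
  have t1: "t < 1" unfolding t_def using q1 q2 by (simp add: divide_less_eq)
  have g0: "\<gamma> > 0"
  proof -
    have "\<gamma> = \<alpha> * (1 - \<alpha>)^2 / (1 + \<alpha>^2)" unfolding \<gamma>_def t_def
      using q0 q2 by (simp add: field_simps power2_eq_square)
    thus ?thesis using a0 a1 q2 by simp
  qed
  have beta: "\<gamma> / (1 - t) = \<alpha> * (1 - \<alpha>) / (1 + \<alpha>)"
  proof -
    have h1: "1 - t = (1 - \<alpha>) * (1 + \<alpha>) / (1 + \<alpha>^2)" unfolding t_def
      using q0 q2 by (simp add: field_simps power2_eq_square)
    have h2: "\<gamma> = \<alpha> * (1 - \<alpha>)^2 / (1 + \<alpha>^2)" unfolding \<gamma>_def t_def
      using q0 q2 by (simp add: field_simps power2_eq_square)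
    have a2: "1 + \<alpha> > 0" using a0 by simp
    have "\<alpha> * (1 - \<alpha>) / (1 + \<alpha>) * (1 - t) = \<gamma>"
      unfolding h1 h2 using a2 q2 by (simp add: power2_eq_square)
    moreover have "1 - t \<noteq> 0" using t1 by simp
    ultimately show ?thesis by (metis nonzero_mult_div_cancel_right)
  qed
  have p2: "2 powr (1 / \<alpha>^2) \<ge> 2 powr 1"
    using q0 q1 by (intro powr_mono) (auto simp: field_simps)
  hence L30: "L \<ge> 30" unfolding L_def by simp
  have Lt: "L powr t \<ge> 4 powr \<delta>"
  proof -
    have "(2 powr (1 / \<alpha>^2)) powr t = 2 powr (1 / \<alpha>^2 * t)" by (simp add: powr_powr)
    also have "1 / \<alpha>^2 * t = 2 - t" unfolding t_def using q0 q2 by (simp add: field_simps)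
    finally have e1: "L powr t = 15 powr t * 2 powr (2 - t)" unfolding L_def by (simp add: powr_mult)
    have "8 powr t \<le> 15 powr t" using t0 by (intro powr_mono2) auto
    moreover have "8 powr t = 4 powr t * 2 powr t" using powr_mult[of 4 2 t] by simp
    ultimately have "4 powr t * 2 powr t * 2 powr (2 - t) \<le> 15 powr t * 2 powr (2 - t)"
      by (intro mult_right_mono) auto
    moreover have "2 powr t * 2 powr (2 - t) = 4" using powr_add[of 2 t "2 - t"] by simp
    moreover have "4 powr \<delta> = 4 * 4 powr t" unfolding \<delta>_def using powr_add[of 4 1 t] by simp
    ultimately show ?thesis using e1 by (simp add: mult.assoc)
  qed
  have KK: "K = 10 * 2 powr (1 / \<alpha>^2 + 1)" unfolding K_def L_def using powr_add[of 2 "1/\<alpha>^2" 1] by simp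
  show ?thesis
  proof (intro exI[of _ 1] allI impI)
    fix n :: nat and V :: "nat set" and E
    assume n1: "n \<ge> 1" and sg: "simple_graph V E" and cV: "card V = n"
      and cE: "real (card E) \<ge> real n powr (1 + \<alpha>)"
    have finV: "finite V" and EV: "\<forall>e\<in>E. e \<subseteq> V \<and> card e = 2" using sg unfolding simple_graph_def by auto
    have n01: "real n \<ge> 1" using n1 by simp
    have "real n powr (1 + \<alpha>) \<ge> 1" using n01 a0 by (intro ge_one_powr_ge_zero) auto
    hence "card E \<ge> 1" using cE by linarith
    hence Ene: "E \<noteq> {}" by auto
    have "real n powr \<gamma> * real n powr \<delta> = real n powr (1 + \<alpha>)"
      unfolding \<gamma>_def \<delta>_def using powr_add[of "real n" "\<alpha> - t" "1 + t"] by (simp add: add.commute)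
    hence Ebig': "real (card E) \<ge> real n powr \<gamma> * real n powr \<delta>" using cE by simp
    have M: "\<exists>V' E'. V' \<subseteq> V \<and> E' \<subseteq> E \<and> (\<forall>e\<in>E'. e \<subseteq> V') \<and> real (card V') \<ge> real n powr (\<gamma> / (1 - t)) \<and>
        real (card E') \<ge> 1/3 * real (card V') powr (1 + \<alpha>) \<and>
        real (max_degree V' E') \<le> K * real (card V') powr \<alpha>"
      by (rule main[OF a0 a1 t0 t1 g0 \<delta>_def \<gamma>_def L30 Lt K_def n01, of n, rule_format,
            OF cV finV order_refl EV[rule_format] Ene Ebig'])
    then obtain V' E' where VE: "V' \<subseteq> V \<and> E' \<subseteq> E \<and> (\<forall>e\<in>E'. e \<subseteq> V') \<and> real (card V') \<ge> real n powr (\<gamma> / (1 - t)) \<and>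
        real (card E') \<ge> 1/3 * real (card V') powr (1 + \<alpha>) \<and>
        real (max_degree V' E') \<le> K * real (card V') powr \<alpha>" by (elim exE)
    have "subgraph V' E' V E" using VE unfolding subgraph_def by blast
    moreover have "real (card V') \<ge> real n powr (\<alpha> * (1 - \<alpha>) / (1 + \<alpha>))" using VE beta by simp
    moreover have "real (max_degree V' E') \<le> 10 * 2 powr (1 / \<alpha>^2 + 1) * real (card V') powr \<alpha>"
      using VE KK by simp
    ultimately show "\<exists>V' E'. subgraph V' E' V E \<and>
              real (card V') \<ge> real n powr (\<alpha> * (1 - \<alpha>) / (1 + \<alpha>)) \<and>
              real (card E') \<ge> 1/3 * real (card V') powr (1 + \<alpha>) \<and>
              real (max_degree V' E') \<le> 10 * 2 powr (1 / \<alpha>^2 + 1) * real (card V') powr \<alpha>"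
      using VE by blast
  qed
qed

end
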